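(* Let $m,n$ be positive integers, let $\bm{D}_0\in\mathbb{R}^{m\times m}$ be invertible, let $\bm{X}_0\in\mathbb{R}^{m\times n}$, and let $\bm{Y}=\bm{D}_0\bm{X}_0$. Let $\Omega\subseteq[m]\times[n]$ be the support of $\bm{X}_0$, and for $i\in[m]$ let $\Omega_i\subseteq[n]$ be the support of the $i$-th row of $\bm{X}_0$, with complement $\Omega_i^c=[n]\setminus\Omega_i$. Consider the problem of finding $\bm{D}\in\mathbb{R}^{m\times m}$ and $\bm{X}\in\mathbb{R}^{m\times n}$ such that $$\bm{Y}=\bm{D}\bm{X}\quad\text{and}\quad \bm{X}_{i,j}=0\ \text{for all }(i,j)\notin\Omega.$$ Say that this problem has a unique solution if every solution is of the form $\bm{D}=\bm{D}_0\bm{S}$, $\bm{X}=\bm{S}^{-1}\bm{X}_0$ for some diagonal matrix $\bm{S}$ with nonzero diagonal entries. If the problem has a unique solution in this sense, then: (1) $n\ge n_0=m+\frac{|\Omega|}{m}-1$; (2) for all $i\in[m]$, $|\Omega_i^c|\ge m-1$; (3) for all $i\in[m]$ and all $i'\in[m]$ with $i'\ne i$, there exists $j\in[n]$ such that $(\bm{X}_0)_{i,j}=0$ and $(\bm{X}_0)_{i',j}\ne 0$.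
   Context: $[n]=\{1,\dots,n\}$. The support of a matrix or row vector is the set of indices of its nonzero entries. *)

theory Defs
  imports "HOL-Analysis.Analysis"
begin

definition diag_nonsingular :: "real ^'m ^'m \<Rightarrow> bool" where
  "diag_nonsingular S \<longleftrightarrow> (\<forall>i j. i \<noteq> j \<longrightarrow> S $ i $ j = 0) \<and> (\<forall>i. S $ i $ i \<noteq> 0)"

definition unique_factorization :: "real ^'m ^'m \<Rightarrow> real ^'n ^'m \<Rightarrow> bool" where
  "unique_factorization D0 X0 \<longleftrightarrow>
     (\<forall>(D :: real ^'m ^'m) (X :: real ^'n ^'m).
        D0 ** X0 = D ** X \<and> (\<forall>i j. X0 $ i $ j = 0 \<longrightarrow> X $ i $ j = 0) \<longrightarrow>
        (\<exists>S. diag_nonsingular S \<and> D = D0 ** S \<and> X = matrix_inv S ** X0))"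

end

theory Submission
  imports Defs
begin

lemma mm_add_rdistrib: "((A::'a::comm_ring_1^'k^'l) + B) ** C = A ** C + B ** C"
  by (simp add: vec_eq_iff matrix_matrix_mult_def sum.distrib distrib_right)

lemma mm_sub_rdistrib: "((A::'a::comm_ring_1^'k^'l) - B) ** C = A ** C - B ** C"
  by (simp add: vec_eq_iff matrix_matrix_mult_def sum_subtractf left_diff_distrib)

lemma mm_sub_ldistrib: "(C::'a::comm_ring_1^'k^'l) ** (A - B) = C ** A - C ** B"
  by (simp add: vec_eq_iff matrix_matrix_mult_def sum_subtractf right_diff_distrib)

lemma no_shear:
  fixes D0 :: "real ^'m ^'m" and X0 :: "real ^'n ^'m"
  assumes inv: "invertible D0"
    and uf: "unique_factorization D0 X0"
    and wi: "w $ i = 0" and wk: "w $ k \<noteq> 0"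
    and hw: "\<forall>j. X0 $ i $ j = 0 \<longrightarrow> (\<Sum>k\<in>UNIV. w $ k * X0 $ k $ j) = 0"
  shows False
proof -
  define E :: "real ^'m ^'m" where "E = (\<chi> r c. if r = i then w $ c else 0)"
  define T where "T = mat 1 + E"
  define Ti where "Ti = mat 1 - E"
  have EE: "E ** E = 0"
  proof -
    have "(E ** E) $ r $ c = 0" for r c
    proof -
      have "(E ** E) $ r $ c = (\<Sum>k\<in>UNIV. (if r = i then w $ k else 0) * (if k = i then w $ c else 0))"
        by (simp add: E_def matrix_matrix_mult_def)
      also have "\<dots> = (\<Sum>k\<in>(UNIV::'m set). (0::real))"
        by (rule sum.cong[OF refl]) (auto simp: wi)
      finally show ?thesis by simp
    qed
    then show ?thesis by (simp add: vec_eq_iff)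
  qed
  have TiT: "Ti ** T = mat 1"
    by (simp add: T_def Ti_def matrix_add_ldistrib mm_sub_rdistrib EE matrix_mul_lid matrix_mul_rid)
  have "D0 ** Ti ** (T ** X0) = D0 ** X0"
    by (simp add: matrix_mul_assoc[symmetric] TiT matrix_mul_rid)
    (metis TiT matrix_mul_assoc matrix_mul_lid)
  moreover have "\<forall>r j. X0 $ r $ j = 0 \<longrightarrow> (T ** X0) $ r $ j = 0"
  proof (intro allI impI)
    fix r j assume 0: "X0 $ r $ j = 0"
    have "(T ** X0) $ r $ j = X0 $ r $ j + (if r = i then (\<Sum>k\<in>UNIV. w $ k * X0 $ k $ j) else 0)"
    proof -
      have "T ** X0 = X0 + E ** X0" by (simp add: T_def mm_add_rdistrib matrix_mul_lid)
      moreover have "(E ** X0) $ r $ j = (if r = i then (\<Sum>k\<in>UNIV. w $ k * X0 $ k $ j) else 0)"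
        by (simp add: E_def matrix_matrix_mult_def)
      ultimately show ?thesis by simp
    qed
    then show "(T ** X0) $ r $ j = 0" using 0 hw by auto
  qed
  ultimately obtain S where S: "diag_nonsingular S" "D0 ** Ti = D0 ** S"
    using uf unfolding unique_factorization_def by (metis (no_types, lifting))
  from inv obtain B where B: "B ** D0 = mat 1" unfolding invertible_def by blast
  have "B ** (D0 ** Ti) = B ** (D0 ** S)" using S(2) by simp
  hence "Ti = S" by (simp add: matrix_mul_assoc B matrix_mul_lid)
  moreover have "k \<noteq> i" using wi wk by auto
  ultimately have "S $ i $ k = - w $ k"
    by (auto simp: Ti_def E_def mat_def)
  moreover have "S $ i $ k = 0" using S(1) \<open>k \<noteq> i\<close> unfolding diag_nonsingular_def by auto
  ultimately show False using wk by simp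
qed

lemma exists_w:
  fixes X0 :: "real ^'n ^'m"
  assumes c: "card {j. X0 $ i $ j = 0} < CARD('m) - 1"
  shows "\<exists>w k. w $ i = 0 \<and> w $ k \<noteq> 0 \<and>
     (\<forall>j. X0 $ i $ j = 0 \<longrightarrow> (\<Sum>k\<in>UNIV. w $ k * X0 $ k $ j) = 0)"
proof (rule ccontr)
  assume nw: "\<not> ?thesis"
  define M :: "real ^'m ^'n" where "M = (\<chi> j k. if X0 $ i $ j = 0 then X0 $ k $ j else 0)"
  define U :: "(real ^'m) set" where "U = {w. \<forall>k. k \<notin> (UNIV - {i}) \<longrightarrow> w $ k = 0}"
  define W :: "(real ^'n) set" where "W = {v. \<forall>j. j \<notin> {j. X0 $ i $ j = 0} \<longrightarrow> v $ j = 0}"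
  have sU: "vec.subspace U" unfolding U_def by (rule subspace_substandard_cart)
  have inj: "inj_on ((*v) M) U"
  proof (subst vec.inj_on_iff_eq_0[OF sU], intro ballI impI)
    fix x assume xU: "x \<in> U" and Mx: "M *v x = 0"
    have xi: "x $ i = 0" using xU by (auto simp: U_def)
    have "\<forall>j. X0 $ i $ j = 0 \<longrightarrow> (\<Sum>k\<in>UNIV. x $ k * X0 $ k $ j) = 0"
    proof (intro allI impI)
      fix j assume "X0 $ i $ j = 0"
      moreover have "(M *v x) $ j = 0" using Mx by simp
      ultimately show "(\<Sum>k\<in>UNIV. x $ k * X0 $ k $ j) = 0"
        by (simp add: M_def matrix_vector_mult_def mult.commute)
    qed
    then show "x = 0" using nw xi by (auto simp: vec_eq_iff)
  qed
  have "vec.dim ((*v) M ` U) = vec.dim U"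
    by (rule vec.dim_image_eq[OF matrix_vector_mul_linear_gen]) (metis inj sU vec.span_eq_iff)
  also have "vec.dim U = card (UNIV - {i})" unfolding U_def by (rule dim_substandard_cart)
  also have "\<dots> = CARD('m) - 1" by (simp add: card_Diff_singleton)
  finally have d1: "vec.dim ((*v) M ` U) = CARD('m) - 1" .
  have "(*v) M ` U \<subseteq> W"
    by (auto simp: W_def M_def matrix_vector_mult_def)
  then have "vec.dim ((*v) M ` U) \<le> vec.dim W" by (rule vec.dim_subset)
  also have "vec.dim W = card {j. X0 $ i $ j = 0}" unfolding W_def by (rule dim_substandard_cart)
  finally show False using d1 c by simp
qed

theorem proposition2:
  fixes D0 :: "real ^'m ^'m" and X0 :: "real ^'n ^'m"
  assumes "invertible D0"
    and "unique_factorization D0 X0"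
  shows "real CARD('n) \<ge> real CARD('m) + real (card {(i, j). X0 $ i $ j \<noteq> 0}) / real CARD('m) - 1
    \<and> (\<forall>i. card {j. X0 $ i $ j = 0} \<ge> CARD('m) - 1)
    \<and> (\<forall>i i'. i' \<noteq> i \<longrightarrow> (\<exists>j. X0 $ i $ j = 0 \<and> X0 $ i' $ j \<noteq> 0))"
proof -
  have P2: "\<forall>i. card {j. X0 $ i $ j = 0} \<ge> CARD('m) - 1"
  proof
    fix i
    show "card {j. X0 $ i $ j = 0} \<ge> CARD('m) - 1"
    proof (rule ccontr)
      assume "\<not> ?thesis"
      then obtain w k where "w $ i = 0" "w $ k \<noteq> 0"
        "\<forall>j. X0 $ i $ j = 0 \<longrightarrow> (\<Sum>k\<in>UNIV. w $ k * X0 $ k $ j) = 0"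
        using exists_w[of X0 i] by auto
      then show False using no_shear[OF assms] by blast
    qed
  qed
  have P3: "\<forall>i i'. i' \<noteq> i \<longrightarrow> (\<exists>j. X0 $ i $ j = 0 \<and> X0 $ i' $ j \<noteq> 0)"
  proof (intro allI impI, rule ccontr)
    fix i i' :: 'm
    assume ne: "i' \<noteq> i" and nx: "\<not> (\<exists>j. X0 $ i $ j = 0 \<and> X0 $ i' $ j \<noteq> 0)"
    define w :: "real ^'m" where "w = axis i' 1"
    have "w $ i = 0" "w $ i' \<noteq> 0" using ne by (auto simp: w_def axis_def)
    moreover have "\<forall>j. X0 $ i $ j = 0 \<longrightarrow> (\<Sum>k\<in>UNIV. w $ k * X0 $ k $ j) = 0"
    proof (intro allI impI)
      fix j assume "X0 $ i $ j = 0"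
      have "(\<Sum>k\<in>UNIV. w $ k * X0 $ k $ j) = (\<Sum>k\<in>UNIV. if k = i' then X0 $ k $ j else 0)"
        by (rule sum.cong[OF refl]) (simp add: w_def axis_def)
      also have "\<dots> = X0 $ i' $ j" by simp
      finally show "(\<Sum>k\<in>UNIV. w $ k * X0 $ k $ j) = 0" using nx \<open>X0 $ i $ j = 0\<close> by auto
    qed
    ultimately show False using no_shear[OF assms] by blast
  qed
  let ?m = "CARD('m)" and ?n = "CARD('n)"
  have Om: "{(i, j). X0 $ i $ j \<noteq> 0} = Sigma UNIV (\<lambda>i. {j. X0 $ i $ j \<noteq> 0})" by auto
  have cardOm: "real (card {(i, j). X0 $ i $ j \<noteq> 0}) = (\<Sum>i\<in>UNIV. real (card {j. X0 $ i $ j \<noteq> 0}))"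
    unfolding Om by (simp add: card_SigmaI)
  have rowc: "real (card {j. X0 $ i $ j \<noteq> 0}) = real ?n - real (card {j. X0 $ i $ j = 0})" for i
  proof -
    have "card {j. X0 $ i $ j \<noteq> 0} + card {j. X0 $ i $ j = 0} = ?n"
    proof -
      have u: "{j. X0 $ i $ j \<noteq> 0} \<union> {j. X0 $ i $ j = 0} = UNIV" by auto
      have "card ({j. X0 $ i $ j \<noteq> 0} \<union> {j. X0 $ i $ j = 0}) = card {j. X0 $ i $ j \<noteq> 0} + card {j. X0 $ i $ j = 0}"
        by (rule card_Un_disjoint) auto
      then show ?thesis unfolding u by simp
    qed
    then show ?thesis by linarith
  qed
  have m1: "?m \<ge> 1" by (simp add: Suc_leI)
  have zb: "real (card {j. X0 $ i $ j = 0}) \<ge> real ?m - 1" for i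
    using P2 m1 by (metis of_nat_1 of_nat_diff of_nat_le_iff)
  have "real (card {(i, j). X0 $ i $ j \<noteq> 0}) \<le> (\<Sum>i\<in>(UNIV::'m set). real ?n - (real ?m - 1))"
    unfolding cardOm rowc by (rule sum_mono) (smt (verit) zb)
  also have "\<dots> = real ?m * (real ?n - real ?m + 1)" by simp
  finally have "real (card {(i, j). X0 $ i $ j \<noteq> 0}) / real ?m \<le> real ?n - real ?m + 1"
    using m1 by (simp add: divide_le_eq mult.commute)
  then have P1: "real ?n \<ge> real ?m + real (card {(i, j). X0 $ i $ j \<noteq> 0}) / real ?m - 1" by linarith
  show ?thesis using P1 P2 P3 by blast
qed

end
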